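(* Let $f:(\mathbb R^2,0)\to(\mathbb R^3,0)$ be a smooth germ of the form $f(u,v)=(u,f_2(u,v),f_3(u,v))$ with $$j^2f(0)=\Big(u,\tfrac12(a_{20}u^2+2a_{11}uv+a_{02}v^2),\tfrac12(b_{20}u^2+2b_{11}uv+b_{02}v^2)\Big),$$ and let $p=0\in M=f(\mathbb R^2)$. Suppose the curvature parabola $\Delta_p$ is a non-degenerate parabola or a half-line. Then $$\kappa_a(p)=\frac{1}{\sqrt{a_{02}^2+b_{02}^2}}\Big((a_{20}a_{02}+b_{20}b_{02})-\frac{(a_{11}a_{02}+b_{11}b_{02})^2}{a_{02}^2+b_{02}^2}\Big).$$
   Context: For such $f$, the normal plane $N_pM$ is the $(y,z)$-coordinate plane and the curvature parabola $\Delta_p$ is parametrized by $\eta(y)=(0,a_{20}+2a_{11}y+a_{02}y^2,\,b_{20}+2b_{11}y+b_{02}y^2)$, $y\in\mathbb R$ (this is the image of the unit vectors $\partial_u+y\partial_v$ of the first fundamental form under $X\mapsto II(X,X)$, where $II$ is the normal projection of the second derivatives of $f$). It is a non-degenerate parabola, a half-line, a line, or a point. Axial vector $v_a$: if $\Delta_p$ is a non-degenerate parabola, $v_a$ is the unit vector along its axis of symmetry pointing towards its interior (orthogonal to the directrix direction $v_d$, with $\{v_a,v_d\}$ positively oriented); if $\Delta_p$ is a half-line, $v_a$ is the unit vector in the direction $\eta'(y)/|\eta'(y)|$ for $y>0$ with $\eta'(y)\ne0$. The axial curvature is $\kappa_a(p)=\min_{y\in\mathbb R}\langle\eta(y),v_a\rangle$.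 *)

theory Defs
  imports "HOL-Analysis.Analysis"
begin

text \<open>The normal plane N_pM is identified with the (y,z)-coordinate plane, modelled
  as real \<times> real (with its standard inner product).\<close>

definition curv_eta :: "real \<Rightarrow> real \<Rightarrow> real \<Rightarrow> real \<Rightarrow> real \<Rightarrow> real \<Rightarrow> real \<Rightarrow> real \<times> real" where
  "curv_eta a20 a11 a02 b20 b11 b02 y =
     (a20 + 2*a11*y + a02*y^2, b20 + 2*b11*y + b02*y^2)"

definition curv_parabola :: "real \<Rightarrow> real \<Rightarrow> real \<Rightarrow> real \<Rightarrow> real \<Rightarrow> real \<Rightarrow> (real \<times> real) set" where
  "curv_parabola a20 a11 a02 b20 b11 b02 = range (curv_eta a20 a11 a02 b20 b11 b02)"

definition parabola_data :: "(real \<times> real) set \<Rightarrow> real \<times> real \<Rightarrow> real \<times> real \<Rightarrow> real \<times> real \<Rightarrow> bool" where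
  "parabola_data S F q d \<longleftrightarrow> d \<noteq> 0 \<and> F \<notin> {q + t *\<^sub>R d | t. True} \<and>
     S = {x. dist x F = infdist x {q + t *\<^sub>R d | t. True}}"

definition nondeg_parabola :: "(real \<times> real) set \<Rightarrow> bool" where
  "nondeg_parabola S \<longleftrightarrow> (\<exists>F q d. parabola_data S F q d)"

definition half_line :: "(real \<times> real) set \<Rightarrow> bool" where
  "half_line S \<longleftrightarrow> (\<exists>x0 v. v \<noteq> 0 \<and> S = {x0 + t *\<^sub>R v | t. t \<ge> 0})"

definition axial_vector :: "(real \<times> real) set \<Rightarrow> real \<times> real" where
  "axial_vector S =
    (if nondeg_parabola S then
       (THE v. norm v = 1 \<and> (\<exists>F q d. parabola_data S F q d \<and> inner v d = 0 \<and> inner (F - q) v > 0))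
     else
       (THE v. norm v = 1 \<and> (\<exists>x0. S = {x0 + t *\<^sub>R v | t. t \<ge> 0})))"

definition axial_curvature :: "real \<Rightarrow> real \<Rightarrow> real \<Rightarrow> real \<Rightarrow> real \<Rightarrow> real \<Rightarrow> real" where
  "axial_curvature a20 a11 a02 b20 b11 b02 =
    (let eta = curv_eta a20 a11 a02 b20 b11 b02;
         va = axial_vector (curv_parabola a20 a11 a02 b20 b11 b02)
     in THE m. (\<exists>y. m = inner (eta y) va) \<and> (\<forall>y. m \<le> inner (eta y) va))"

end

theory Submission
  imports Defs "HOL-Computational_Algebra.Polynomial"
begin


lemma quartic_zero:
  fixes c0 c1 c2 c3 c4 :: real
  assumes "\<forall>y. c0 + c1*y + c2*y^2 + c3*y^3 + c4*y^4 = 0"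
  shows "c0 = 0 \<and> c1 = 0 \<and> c2 = 0 \<and> c3 = 0 \<and> c4 = 0"
proof -
  have "poly [:c0, c1, c2, c3, c4:] y = c0 + c1*y + c2*y^2 + c3*y^3 + c4*y^4" for y
    by (simp add: algebra_simps eval_nat_numeral)
  then have "\<forall>y. poly [:c0, c1, c2, c3, c4:] y = 0" using assms by simp
  then have "[:c0, c1, c2, c3, c4:] = 0" using poly_all_0_iff_0 by blast
  then show ?thesis by simp
qed

lemma infdist_line:
  fixes x1 x2 q1 q2 d1 d2 :: real
  assumes "(d1,d2) \<noteq> (0,0)"
  shows "infdist (x1,x2) {(q1,q2) + t *\<^sub>R (d1,d2) | t. True}
         = sqrt (((x1-q1)*d2 - (x2-q2)*d1)^2 / (d1^2+d2^2))"
proof -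
  define D where "D = d1^2+d2^2"
  have D: "D > 0" using assms by (auto simp: D_def sum_power2_gt_zero_iff)
  define c where "c = (x1-q1)*d2 - (x2-q2)*d1"
  define E where "E t = (x1 - (q1 + t*d1))^2 + (x2 - (q2+t*d2))^2" for t
  have key: "E t * D = ((x1-q1)*d1 + (x2-q2)*d2 - t*D)^2 + c^2" for t
    unfolding E_def D_def c_def by algebra
  have dist: "dist (x1,x2) ((q1,q2) + t *\<^sub>R (d1,d2)) = sqrt (E t)" for t
    by (simp add: dist_Pair_Pair dist_real_def E_def)
  have ge: "sqrt (c^2/D) \<le> dist (x1,x2) ((q1,q2) + t *\<^sub>R (d1,d2))" for t
  proof -
    have "c^2 \<le> E t * D" using key[of t] by simp
    then have "c^2/D \<le> E t" using D by (simp add: pos_divide_le_eq)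
    then show ?thesis unfolding dist by (rule real_sqrt_le_mono)
  qed
  define t0 where "t0 = ((x1-q1)*d1 + (x2-q2)*d2)/D"
  have "(x1-q1)*d1 + (x2-q2)*d2 - t0*D = 0" using D by (simp add: t0_def)
  then have "E t0 * D = c^2" using key[of t0] by simp
  then have "E t0 = c^2/D" using D by (simp add: eq_divide_eq)
  then have eq: "dist (x1,x2) ((q1,q2) + t0 *\<^sub>R (d1,d2)) = sqrt (c^2/D)" using dist by simp
  let ?L = "{(q1,q2) + t *\<^sub>R (d1,d2) | t. True}"
  have mem: "(q1,q2) + t0 *\<^sub>R (d1,d2) \<in> ?L" by blast
  have ne: "?L \<noteq> {}" by blast
  have "infdist (x1,x2) ?L \<le> sqrt (c^2/D)" using infdist_le[OF mem, of "(x1,x2)"] eq by simp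
  moreover have "sqrt (c^2/D) \<le> infdist (x1,x2) ?L"
    unfolding infdist_notempty[OF ne] by (rule cINF_greatest) (use ne ge in auto)
  ultimately show ?thesis unfolding c_def D_def by simp
qed

lemma parab_mem:
  fixes x1 x2 f1 f2 q1 q2 d1 d2 :: real
  assumes "parabola_data S (f1,f2) (q1,q2) (d1,d2)"
  shows "(x1,x2) \<in> S \<longleftrightarrow> ((x1-f1)^2 + (x2-f2)^2)*(d1^2+d2^2) = ((x1-q1)*d2 - (x2-q2)*d1)^2"
proof -
  have d: "(d1,d2) \<noteq> (0,0)" using assms by (simp add: parabola_data_def zero_prod_def)
  have D: "d1^2+d2^2 > 0" using d by (auto simp: sum_power2_gt_zero_iff)
  have "(x1,x2) \<in> S \<longleftrightarrow> sqrt ((x1-f1)^2 + (x2-f2)^2) = sqrt (((x1-q1)*d2 - (x2-q2)*d1)^2 / (d1^2+d2^2))"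
    using assms infdist_line[OF d, of x1 x2 q1 q2]
    by (simp add: parabola_data_def dist_Pair_Pair dist_real_def)
  also have "\<dots> \<longleftrightarrow> (x1-f1)^2 + (x2-f2)^2 = ((x1-q1)*d2 - (x2-q2)*d1)^2 / (d1^2+d2^2)"
    by simp
  also have "\<dots> \<longleftrightarrow> ((x1-f1)^2 + (x2-f2)^2)*(d1^2+d2^2) = ((x1-q1)*d2 - (x2-q2)*d1)^2"
    using D by (intro nonzero_eq_divide_eq) (auto simp: sum_power2_gt_zero_iff)
  finally show ?thesis .
qed

lemma off_line:
  fixes f1 f2 q1 q2 d1 d2 :: real
  assumes "parabola_data S (f1,f2) (q1,q2) (d1,d2)"
  shows "(f1-q1)*d2 - (f2-q2)*d1 \<noteq> 0"
proof
  assume h: "(f1-q1)*d2 - (f2-q2)*d1 = 0"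
  have d: "(d1,d2) \<noteq> (0,0)" using assms by (simp add: parabola_data_def zero_prod_def)
  define D where "D = d1^2+d2^2"
  have D: "D > 0" using d by (auto simp: sum_power2_gt_zero_iff D_def)
  define t0 where "t0 = ((f1-q1)*d1 + (f2-q2)*d2)/D"
  have "(f1-q1)*D = ((f1-q1)*d1 + (f2-q2)*d2)*d1"
    using h unfolding D_def by algebra
  then have 1: "f1 = q1 + t0*d1" using D by (simp add: t0_def field_simps)
  have "(f2-q2)*D = ((f1-q1)*d1 + (f2-q2)*d2)*d2"
    using h unfolding D_def by algebra
  then have 2: "f2 = q2 + t0*d2" using D by (simp add: t0_def field_simps)
  have "(f1,f2) = (q1,q2) + t0 *\<^sub>R (d1,d2)" using 1 2 by simp
  then show False using assms by (auto simp: parabola_data_def)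
qed


lemma par_facts:
  fixes f1 f2 q1 q2 d1 d2 :: real
  assumes P: "parabola_data (curv_parabola a20 a11 a02 b20 b11 b02) (f1,f2) (q1,q2) (d1,d2)"
  shows "a02*d1 + b02*d2 = 0 \<and> a11*d1 + b11*d2 \<noteq> 0 \<and> (f1-q1)*a02 + (f2-q2)*b02 > 0"
proof -
  have d: "(d1,d2) \<noteq> (0,0)" using P by (simp add: parabola_data_def zero_prod_def)
  define D where "D = d1^2+d2^2"
  have D: "D > 0" using d by (auto simp: sum_power2_gt_zero_iff D_def)
  define h where "h = (f1-q1)*d2 - (f2-q2)*d1"
  have h: "h \<noteq> 0" using off_line[OF P] by (simp add: h_def)
  define p1 where "p1 = a20 - f1"
  define p2 where "p2 = b20 - f2"
  define Q where "Q = (a20-q1)*d2 - (b20-q2)*d1"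
  define bn where "bn = a11*d2 - b11*d1"
  define cn where "cn = a02*d2 - b02*d1"
  define bd where "bd = a11*d1 + b11*d2"
  define cd where "cd = a02*d1 + b02*d2"
  define c0 where "c0 = D*(p1^2+p2^2) - Q^2"
  define c1 where "c1 = 4*(D*(p1*a11+p2*b11) - Q*bn)"
  define c2 where "c2 = D*(4*(a11^2+b11^2) + 2*(p1*a02+p2*b02)) - 4*bn^2 - 2*Q*cn"
  define c3 where "c3 = 4*(D*(a11*a02+b11*b02) - bn*cn)"
  define c4 where "c4 = D*(a02^2+b02^2) - cn^2"
  have memS: "(x1,x2) \<in> curv_parabola a20 a11 a02 b20 b11 b02 \<longleftrightarrow>
      ((x1-f1)^2 + (x2-f2)^2)*D = ((x1-q1)*d2 - (x2-q2)*d1)^2" for x1 x2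
    using parab_mem[OF P] D_def by simp
  have "c0 + c1*y + c2*y^2 + c3*y^3 + c4*y^4 = 0" for y
  proof -
    have "(a20 + 2*a11*y + a02*y^2, b20 + 2*b11*y + b02*y^2) \<in> curv_parabola a20 a11 a02 b20 b11 b02"
      unfolding curv_parabola_def curv_eta_def by blast
    then have e: "((a20 + 2*a11*y + a02*y^2-f1)^2 + (b20 + 2*b11*y + b02*y^2-f2)^2)*D
       = ((a20 + 2*a11*y + a02*y^2-q1)*d2 - (b20 + 2*b11*y + b02*y^2-q2)*d1)^2"
      using memS by blast
    have "((a20 + 2*a11*y + a02*y^2-f1)^2 + (b20 + 2*b11*y + b02*y^2-f2)^2)*D
       - ((a20 + 2*a11*y + a02*y^2-q1)*d2 - (b20 + 2*b11*y + b02*y^2-q2)*d1)^2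
       = c0 + c1*y + c2*y^2 + c3*y^3 + c4*y^4"
      unfolding c0_def c1_def c2_def c3_def c4_def p1_def p2_def Q_def bn_def cn_def by algebra
    then show ?thesis using e by simp
  qed
  then have cs: "c0 = 0 \<and> c1 = 0 \<and> c2 = 0 \<and> c3 = 0 \<and> c4 = 0" using quartic_zero by blast
  have "cd^2 = 0" using cs unfolding c4_def cd_def cn_def D_def by algebra
  then have cd0: "cd = 0" by simp
  have e2: "cn*h = 2*bd^2" using cs cd0
    unfolding c2_def cd_def cn_def D_def bd_def bn_def h_def p1_def p2_def Q_def by algebra
  have e1: "((p1*d1 + p2*d2))*bd = h*bn" using cs
    unfolding c1_def cd_def cn_def D_def bd_def bn_def h_def p1_def p2_def Q_def by algebra
  have e3: "D*((f1-q1)*a02 + (f2-q2)*b02) = h*cn" using cd0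
    unfolding cd_def cn_def D_def h_def by algebra
  have bd0: "bd \<noteq> 0"
  proof
    assume b0: "bd = 0"
    then have "bn = 0" using e1 h by simp
    have "D*(a11^2+b11^2) = bd^2 + bn^2" unfolding D_def bd_def bn_def by algebra
    then have "a11^2+b11^2 = 0" using b0 \<open>bn = 0\<close> D by simp
    then have B0: "a11 = 0" "b11 = 0" by (auto simp: sum_power2_eq_zero_iff)
    have "cn = 0" using e2 b0 h by simp
    have "D*(a02^2+b02^2) = cd^2 + cn^2" unfolding D_def cd_def cn_def by algebra
    then have "a02^2+b02^2 = 0" using cd0 \<open>cn = 0\<close> D by simp
    then have C0: "a02 = 0" "b02 = 0" by (auto simp: sum_power2_eq_zero_iff)
    have S1: "curv_parabola a20 a11 a02 b20 b11 b02 = {(a20,b20)}"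
      unfolding curv_parabola_def curv_eta_def using B0 C0 by auto
    define u where "u = (D^2 - h^2)/(2*h*D)"
    have hu: "2*h*u*D = D^2 - h^2" using h D by (simp add: u_def field_simps)
    have "((f1 + s*d1 + u*d2 - f1)^2 + (f2 + s*d2 - u*d1 - f2)^2)*D
        = ((f1 + s*d1 + u*d2 - q1)*d2 - (f2 + s*d2 - u*d1 - q2)*d1)^2" if "s^2 = 1" for s
      using hu that unfolding D_def h_def by algebra
    then have "(f1 + s*d1 + u*d2, f2 + s*d2 - u*d1) \<in> curv_parabola a20 a11 a02 b20 b11 b02"
      if "s^2 = 1" for s using memS that by blast
    from this[of 1] this[of "-1"] have "f1 + d1 + u*d2 = f1 - d1 + u*d2" "f2 + d2 - u*d1 = f2 - d2 - u*d1"
      unfolding S1 by auto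
    then show False using d by simp
  qed
  have "bd^2 > 0" using bd0 by simp
  then have "D*((f1-q1)*a02 + (f2-q2)*b02) > 0" using e3 e2 by (simp add: mult.commute[of h])
  then have "(f1-q1)*a02 + (f2-q2)*b02 > 0" using D by (simp add: zero_less_mult_iff)
  then show ?thesis using cd0 bd0 unfolding cd_def bd_def by simp
qed


lemma hl_facts:
  assumes H: "half_line (curv_parabola a20 a11 a02 b20 b11 b02)"
  shows "a02^2+b02^2 > 0 \<and> a11*b02 - b11*a02 = 0"
proof -
  let ?S = "curv_parabola a20 a11 a02 b20 b11 b02"
  obtain x0 v where v: "v \<noteq> 0" and S: "?S = {x0 + t *\<^sub>R v | t. t \<ge> 0}"
    using H by (auto simp: half_line_def)
  obtain x1 x2 where x0: "x0 = (x1,x2)" by (cases x0)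
  obtain w1 w2 where vv: "v = (w1,w2)" by (cases v)
  have v12: "w1 \<noteq> 0 \<or> w2 \<noteq> 0" using v vv by (auto simp: zero_prod_def)
  have memS: "z \<in> ?S \<longleftrightarrow> (\<exists>t\<ge>0. z = (x1 + t*w1, x2 + t*w2))" for z
    using S x0 vv by auto
  have eta: "(a20 + 2*a11*y + a02*y^2, b20 + 2*b11*y + b02*y^2) \<in> ?S" for y
    unfolding curv_parabola_def curv_eta_def by blast
  have "((a20-x1)*w2 - (b20-x2)*w1) + (2*(a11*w2 - b11*w1))*y + (a02*w2 - b02*w1)*y^2 + 0*y^3 + 0*y^4 = 0" for y
  proof -
    obtain t where "(a20 + 2*a11*y + a02*y^2, b20 + 2*b11*y + b02*y^2) = (x1 + t*w1, x2 + t*w2)"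
      using eta[of y] memS by blast
    then have "a20 + 2*a11*y + a02*y^2 = x1 + t*w1" "b20 + 2*b11*y + b02*y^2 = x2 + t*w2" by auto
    then show ?thesis by algebra
  qed
  then have cs: "a11*w2 - b11*w1 = 0" "a02*w2 - b02*w1 = 0"
    using quartic_zero by (metis mult_eq_0_iff zero_neq_numeral)+
  have "w1*(a11*b02 - b11*a02) = 0" "w2*(a11*b02 - b11*a02) = 0" using cs by algebra+
  then have cross: "a11*b02 - b11*a02 = 0" using v12 by auto
  have "a02^2+b02^2 > 0"
  proof (rule ccontr)
    assume "\<not> ?thesis"
    then have C0: "a02 = 0" "b02 = 0" by (auto simp: sum_power2_gt_zero_iff)
    have "x0 \<in> ?S" using S by force
    then obtain y0 where y0: "x0 = (a20 + 2*a11*y0, b20 + 2*b11*y0)"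
      unfolding curv_parabola_def curv_eta_def using C0 by auto
    obtain t1 where t1: "t1 \<ge> 0" "(a20 + 2*a11*(y0+1), b20 + 2*b11*(y0+1)) = (x1 + t1*w1, x2 + t1*w2)"
      using eta[of "y0+1"] memS C0 by auto
    obtain t2 where t2: "t2 \<ge> 0" "(a20 + 2*a11*(y0-1), b20 + 2*b11*(y0-1)) = (x1 + t2*w1, x2 + t2*w2)"
      using eta[of "y0-1"] memS C0 by auto
    have e: "x1 = a20 + 2*a11*y0" "x2 = b20 + 2*b11*y0" using y0 x0 by auto
    have "(t1+t2)*w1 = 0" "(t1+t2)*w2 = 0" using t1(2) t2(2) e by (auto simp: algebra_simps)
    then have "t1 + t2 = 0" using v12 by auto
    then have "t1 = 0" using t1(1) t2(1) by simp
    then have B0: "a11 = 0" "b11 = 0" using t1(2) e by auto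
    have S1: "?S = {(a20,b20)}"
      unfolding curv_parabola_def curv_eta_def using B0 C0 by auto
    have "x0 + 1 *\<^sub>R v \<in> ?S" unfolding S by (intro CollectI exI[of _ 1]) simp
    moreover have "x0 + 0 *\<^sub>R v \<in> ?S" unfolding S by (intro CollectI exI[of _ 0]) simp
    ultimately have "v = 0" unfolding S1 by simp
    then show False using v by simp
  qed
  then show ?thesis using cross by simp
qed

lemma hl_unique:
  fixes p p' w w' :: "'a::real_normed_vector"
  assumes E: "{p + t *\<^sub>R w | t. t \<ge> 0} = {p' + t *\<^sub>R w' | t. t \<ge> 0}"
    and n: "norm w = 1" "norm w' = 1"
  shows "w' = w"
proof -
  have "p' + 0 *\<^sub>R w' \<in> {p' + t *\<^sub>R w' | t. t \<ge> 0}" by blast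
  then obtain t0 where t0: "p' = p + t0 *\<^sub>R w" unfolding E[symmetric] by auto
  have "p' + 1 *\<^sub>R w' \<in> {p' + t *\<^sub>R w' | t. t \<ge> 0}" by (intro CollectI exI[of _ 1]) simp
  then obtain t1 where t1: "p' + w' = p + t1 *\<^sub>R w" unfolding E[symmetric] by auto
  have w': "w' = (t1 - t0) *\<^sub>R w" using t0 t1 by (simp add: algebra_simps)
  then have "\<bar>t1 - t0\<bar> = 1" using n by simp
  then consider "t1 - t0 = 1" | "t1 - t0 = -1" by linarith
  then show ?thesis
  proof cases
    case 1 then show ?thesis using w' by simp
  next
    case 2
    then have w'': "w' = - w" using w' by simp
    have "p' + (\<bar>t0\<bar> + 1) *\<^sub>R w' \<in> {p' + t *\<^sub>R w' | t. t \<ge> 0}"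
      by (intro CollectI exI[of _ "\<bar>t0\<bar> + 1"]) simp
    then obtain t2 where t2: "t2 \<ge> 0" "p' + (\<bar>t0\<bar> + 1) *\<^sub>R w' = p + t2 *\<^sub>R w"
      unfolding E[symmetric] by auto
    then have "(t2 + \<bar>t0\<bar> + 1 - t0) *\<^sub>R w = 0" using t0 w'' by (simp add: algebra_simps)
    moreover have "t2 + \<bar>t0\<bar> + 1 - t0 \<noteq> 0" using t2(1) by linarith
    ultimately have "w = 0" by simp
    then show ?thesis using n by simp
  qed
qed


theorem mainTheorem2:
  fixes a20 a11 a02 b20 b11 b02 :: real
  assumes "nondeg_parabola (curv_parabola a20 a11 a02 b20 b11 b02)
           \<or> half_line (curv_parabola a20 a11 a02 b20 b11 b02)"
  shows "axial_curvature a20 a11 a02 b20 b11 b02 =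
           1 / sqrt (a02^2 + b02^2) *
           ((a20*a02 + b20*b02) - (a11*a02 + b11*b02)^2 / (a02^2 + b02^2))"
proof -
  let ?S = "curv_parabola a20 a11 a02 b20 b11 b02"
  define K where "K = a02^2 + b02^2"
  define N where "N = sqrt K"
  define va where "va = (a02/N, b02/N)"
  have normva: "norm va = 1" if "K > 0"
  proof -
    have "N^2 = K" using that by (simp add: N_def)
    moreover have "N > 0" using that by (simp add: N_def)
    have "(a02/N)^2 + (b02/N)^2 = K/N^2" unfolding K_def by (simp add: power_divide add_divide_distrib)
    then have "(a02/N)^2 + (b02/N)^2 = 1" using that \<open>N^2 = K\<close> by simp
    then show ?thesis by (simp add: va_def norm_Pair power_abs del: abs_divide)
  qed
  have KN: "K > 0 \<and> axial_vector ?S = va"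
  proof (cases "nondeg_parabola ?S")
    case True
    then obtain F q d where P: "parabola_data ?S F q d" by (auto simp: nondeg_parabola_def)
    obtain f1 f2 q1 q2 d1 d2 where Fqd: "F = (f1,f2)" "q = (q1,q2)" "d = (d1,d2)"
      by (cases F, cases q, cases d) auto
    have pf: "a02*d1 + b02*d2 = 0" "(f1-q1)*a02 + (f2-q2)*b02 > 0"
      using par_facts[of a20 a11 a02 b20 b11 b02 f1 f2 q1 q2 d1 d2] P Fqd by auto
    have K: "K > 0"
    proof (rule ccontr)
      assume "\<not> K > 0"
      then have "a02 = 0" "b02 = 0" by (auto simp: K_def sum_power2_gt_zero_iff)
      then show False using pf by simp
    qed
    have N: "N > 0" "N^2 = K" using K by (auto simp: N_def)
    have "axial_vector ?S = (THE v. norm v = 1 \<and> (\<exists>F q d. parabola_data ?S F q d \<and> inner v d = 0 \<and> inner (F - q) v > 0))"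
      using True by (simp add: axial_vector_def)
    also have "\<dots> = va"
    proof (rule the_equality)
      have "inner va d = (a02*d1 + b02*d2)/N" using Fqd by (simp add: va_def add_divide_distrib)
      moreover have "inner (F - q) va = ((f1-q1)*a02 + (f2-q2)*b02)/N"
        using Fqd by (simp add: va_def add_divide_distrib)
      ultimately have "inner va d = 0" "inner (F - q) va > 0" using pf N by auto
      then show "norm va = 1 \<and> (\<exists>F q d. parabola_data ?S F q d \<and> inner va d = 0 \<and> inner (F - q) va > 0)"
        using normva[OF K] P by blast
    next
      fix v assume "norm v = 1 \<and> (\<exists>F q d. parabola_data ?S F q d \<and> inner v d = 0 \<and> inner (F - q) v > 0)"
      then obtain F' q' d' where nv: "norm v = 1" and P': "parabola_data ?S F' q' d'"
        and vd: "inner v d' = 0" and vF: "inner (F' - q') v > 0" by blast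
      obtain f1 f2 q1 q2 d1 d2 w1 w2 where Fqd': "F' = (f1,f2)" "q' = (q1,q2)" "d' = (d1,d2)" "v = (w1,w2)"
        by (cases F', cases q', cases d', cases v) auto
      have pf': "a02*d1 + b02*d2 = 0" "(f1-q1)*a02 + (f2-q2)*b02 > 0"
        using par_facts[of a20 a11 a02 b20 b11 b02 f1 f2 q1 q2 d1 d2] P' Fqd' by auto
      have d: "d1 \<noteq> 0 \<or> d2 \<noteq> 0" using P' Fqd' by (auto simp: parabola_data_def zero_prod_def)
      have vd': "w1*d1 + w2*d2 = 0" using vd Fqd' by simp
      have vF': "(f1-q1)*w1 + (f2-q2)*w2 > 0" using vF Fqd' by simp
      have nv': "w1^2 + w2^2 = 1" using nv Fqd' by (simp add: norm_Pair)
      have "d1*(w1*b02 - w2*a02) = 0" "d2*(w1*b02 - w2*a02) = 0" using vd' pf'(1) by algebra+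
      then have cr: "w1*b02 - w2*a02 = 0" using d by auto
      define s where "s = w1*a02 + w2*b02"
      have w1: "w1*K = s*a02" "w2*K = s*b02" using cr unfolding s_def K_def by algebra+
      have "K*((f1-q1)*w1 + (f2-q2)*w2) = s*((f1-q1)*a02 + (f2-q2)*b02)"
        using w1 by algebra
      then have "s*((f1-q1)*a02 + (f2-q2)*b02) > 0" using vF' K by (metis mult_pos_pos)
      then have s0: "s > 0" using pf'(2) by (simp add: zero_less_mult_iff)
      have "K*K*(w1^2+w2^2) = s^2*K" using w1 unfolding K_def by algebra
      then have "s^2 = K" using nv' K by simp
      then have "s = N" using s0 N by (metis abs_of_pos real_sqrt_abs N_def)
      then have "N*(N*w1 - a02) = w1*K - s*a02" "N*(N*w2 - b02) = w2*K - s*b02"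
        using N(2) by (simp_all add: power2_eq_square algebra_simps)
      then have "N*(N*w1 - a02) = 0" "N*(N*w2 - b02) = 0" using w1 by simp_all
      then have "N*w1 = a02" "N*w2 = b02" using N(1) by auto
      then have "w1 = a02/N" "w2 = b02/N" using N(1) by (auto simp: field_simps)
      then show "v = va" using Fqd' by (simp add: va_def)
    qed
    finally show ?thesis using K by simp
  next
    case False
    then have H: "half_line ?S" using assms by blast
    have hf: "K > 0" "a11*b02 - b11*a02 = 0" using hl_facts[OF H] by (auto simp: K_def)
    have N: "N > 0" "N^2 = K" using hf by (auto simp: N_def)
    define \<beta> where "\<beta> = (a11*a02 + b11*b02)/K"
    have "a11*K = (a11*a02 + b11*b02)*a02" "b11*K = (a11*a02 + b11*b02)*b02"
      using hf(2) unfolding K_def by algebra+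
    then have B: "a11 = \<beta>*a02" "b11 = \<beta>*b02" using hf(1) by (auto simp: \<beta>_def field_simps)
    define x0 where "x0 = (a20 - \<beta>^2*a02, b20 - \<beta>^2*b02)"
    have Seq: "?S = {x0 + t *\<^sub>R va | t. t \<ge> 0}"
    proof (rule set_eqI, rule iffI)
      fix z assume "z \<in> ?S"
      then obtain y where z: "z = (a20 + 2*a11*y + a02*y^2, b20 + 2*b11*y + b02*y^2)"
        unfolding curv_parabola_def curv_eta_def by auto
      have "z = x0 + ((y+\<beta>)^2*N) *\<^sub>R va"
        using z N B by (simp add: x0_def va_def algebra_simps power2_eq_square)
      moreover have "(y+\<beta>)^2*N \<ge> 0" using N by simp
      ultimately show "z \<in> {x0 + t *\<^sub>R va | t. t \<ge> 0}" by blast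
    next
      fix z assume "z \<in> {x0 + t *\<^sub>R va | t. t \<ge> 0}"
      then obtain t where t: "t \<ge> 0" "z = x0 + t *\<^sub>R va" by auto
      define y where "y = sqrt (t/N) - \<beta>"
      have yb: "(y+\<beta>)^2 = t/N" using t N by (simp add: y_def)
      have "z = (a20 + 2*a11*y + a02*y^2, b20 + 2*b11*y + b02*y^2)"
      proof -
        have "a20 + 2*a11*y + a02*y^2 = a20 - \<beta>^2*a02 + (y+\<beta>)^2*a02"
             "b20 + 2*b11*y + b02*y^2 = b20 - \<beta>^2*b02 + (y+\<beta>)^2*b02"
          using B by algebra+
        then show ?thesis using t yb by (simp add: x0_def va_def)
      qed
      then show "z \<in> ?S" unfolding curv_parabola_def curv_eta_def by auto
    qed
    have "axial_vector ?S = (THE v. norm v = 1 \<and> (\<exists>x0. ?S = {x0 + t *\<^sub>R v | t. t \<ge> 0}))"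
      using False by (simp add: axial_vector_def)
    also have "\<dots> = va"
    proof (rule the_equality)
      show "norm va = 1 \<and> (\<exists>x0. ?S = {x0 + t *\<^sub>R va | t. t \<ge> 0})" using normva[OF hf(1)] Seq by blast
    next
      fix v assume "norm v = 1 \<and> (\<exists>x0. ?S = {x0 + t *\<^sub>R v | t. t \<ge> 0})"
      then obtain x1 where "norm v = 1" "?S = {x1 + t *\<^sub>R v | t. t \<ge> 0}" by blast
      then show "v = va" using hl_unique[of x0 va x1 v] Seq normva[OF hf(1)] by simp
    qed
    finally show ?thesis using hf by simp
  qed
  have K: "K > 0" and av: "axial_vector ?S = va" using KN by auto
  have N: "N > 0" "N^2 = K" using K by (auto simp: N_def)
  define bc where "bc = a11*a02 + b11*b02"
  define T0 where "T0 = (a20*a02 + b20*b02) - bc^2/K"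
  define y0 where "y0 = - bc/K"
  have G: "inner (curv_eta a20 a11 a02 b20 b11 b02 y) va = ((a20*a02 + b20*b02) + 2*bc*y + K*y^2)/N" for y
  proof -
    have "inner (curv_eta a20 a11 a02 b20 b11 b02 y) va
        = ((a20 + 2*a11*y + a02*y^2)*a02 + (b20 + 2*b11*y + b02*y^2)*b02)/N"
      by (simp add: curv_eta_def va_def add_divide_distrib)
    also have "(a20 + 2*a11*y + a02*y^2)*a02 + (b20 + 2*b11*y + b02*y^2)*b02 = (a20*a02 + b20*b02) + 2*bc*y + K*y^2"
      unfolding bc_def K_def by algebra
    finally show ?thesis .
  qed
  have diff: "(a20*a02 + b20*b02) + 2*bc*y + K*y^2 = T0 + K*(y-y0)^2" for y
    using K by (simp add: T0_def y0_def field_simps power2_eq_square)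
  have "axial_curvature a20 a11 a02 b20 b11 b02 = T0/N"
    unfolding axial_curvature_def Let_def av
  proof (rule the_equality)
    show "(\<exists>y. T0/N = inner (curv_eta a20 a11 a02 b20 b11 b02 y) va) \<and> (\<forall>y. T0/N \<le> inner (curv_eta a20 a11 a02 b20 b11 b02 y) va)"
    proof (intro conjI allI exI)
      show "T0/N = inner (curv_eta a20 a11 a02 b20 b11 b02 y0) va" using G diff by simp
      fix y show "T0/N \<le> inner (curv_eta a20 a11 a02 b20 b11 b02 y) va"
        using G diff N K by (simp add: divide_right_mono)
    qed
  next
    fix m assume "(\<exists>y. m = inner (curv_eta a20 a11 a02 b20 b11 b02 y) va) \<and> (\<forall>y. m \<le> inner (curv_eta a20 a11 a02 b20 b11 b02 y) va)"
    then obtain y where m: "m = inner (curv_eta a20 a11 a02 b20 b11 b02 y) va"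
      and le: "m \<le> inner (curv_eta a20 a11 a02 b20 b11 b02 y0) va" by blast
    have "m \<ge> T0/N" using m G diff N K by (simp add: divide_right_mono)
    moreover have "m \<le> T0/N" using le G diff by simp
    ultimately show "m = T0/N" by simp
  qed
  then show ?thesis by (simp add: T0_def N_def K_def bc_def)
qed

end
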